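(* Let $K$ be a field of characteristic zero and $W_n=\mathrm{Der}_K(K[x_1^{\pm1},\ldots,x_n^{\pm1}])$. If $\sigma$ is a Lie algebra automorphism of $W_n$ with $\sigma(\partial_i)=\partial_i$ for all $i=1,\ldots,n$, then $\sigma$ is the identity.
   Context: $\partial_i=\partial/\partial x_i$. *)

theory Defs
  imports Main "HOL-Library.Poly_Mapping"
begin

text \<open>Laurent polynomial ring K[x_i^{+-1} : i in 'n] in the variables indexed by the
finite type 'n: finitely supported maps from integer exponent vectors to K,
with convolution product.\<close>
type_synonym ('n, 'a) laurent = "('n \<Rightarrow>\<^sub>0 int) \<Rightarrow>\<^sub>0 'a"

definition lconst :: "'a::comm_ring_1 \<Rightarrow> ('n, 'a) laurent" where
  "lconst c = Poly_Mapping.single 0 c"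

definition Der :: "(('n, 'a::comm_ring_1) laurent \<Rightarrow> ('n, 'a) laurent) set" where
  "Der = {D. (\<forall>p q. D (p + q) = D p + D q)
            \<and> (\<forall>c p. D (lconst c * p) = lconst c * D p)
            \<and> (\<forall>p q. D (p * q) = p * D q + q * D p)}"

definition lie_bracket ::
  "(('n, 'a::comm_ring_1) laurent \<Rightarrow> ('n, 'a) laurent) \<Rightarrow> (('n, 'a) laurent \<Rightarrow> ('n, 'a) laurent)
   \<Rightarrow> ('n, 'a) laurent \<Rightarrow> ('n, 'a) laurent" where
  "lie_bracket D E = (\<lambda>p. D (E p) - E (D p))"

definition partial :: "'n \<Rightarrow> ('n, 'a::comm_ring_1) laurent \<Rightarrow> ('n, 'a) laurent" where
  "partial i p = (\<Sum>a\<in>Poly_Mapping.keys p. Poly_Mapping.single (a - Poly_Mapping.single i 1)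
                                   (of_int (Poly_Mapping.lookup a i) * Poly_Mapping.lookup p a))"

definition lie_aut :: "((('n, 'a::comm_ring_1) laurent \<Rightarrow> ('n, 'a) laurent)
                        \<Rightarrow> (('n, 'a) laurent \<Rightarrow> ('n, 'a) laurent)) \<Rightarrow> bool" where
  "lie_aut \<sigma> \<longleftrightarrow> bij_betw \<sigma> Der Der
     \<and> (\<forall>D\<in>Der. \<forall>E\<in>Der. \<sigma> (\<lambda>p. D p + E p) = (\<lambda>p. \<sigma> D p + \<sigma> E p))
     \<and> (\<forall>c. \<forall>D\<in>Der. \<sigma> (\<lambda>p. lconst c * D p) = (\<lambda>p. lconst c * \<sigma> D p))
     \<and> (\<forall>D\<in>Der. \<forall>E\<in>Der. \<sigma> (lie_bracket D E) = lie_bracket (\<sigma> D) (\<sigma> E))"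

end

theory Submission
  imports Defs
begin


abbreviation lk where "lk \<equiv> Poly_Mapping.lookup"

definition ee :: "'n \<Rightarrow> 'n \<Rightarrow>\<^sub>0 int" where "ee i = Poly_Mapping.single i 1"
definition X :: "('n \<Rightarrow>\<^sub>0 int) \<Rightarrow> ('n, 'a::comm_ring_1) laurent" where
  "X a = Poly_Mapping.single a 1"

lemma lk_ee: "lk (ee i) j = (if i = j then 1 else 0)"
  by (simp add: ee_def lookup_single)

lemma lookup_lconst_mult: "lk (lconst c * p) d = c * lk p d"
  unfolding lconst_def mult_map_scale_conv_mult[symmetric]
  by (simp add: map.rep_eq when_def)

lemma partial_lookup:
  "lk (partial i p) c = of_int (lk c i + 1) * lk p (c + ee i)"
proof -
  have "lk (partial i p) c = (\<Sum>a\<in>Poly_Mapping.keys p.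
      (if a = c + ee i then of_int (lk a i) * lk p a else 0))"
    unfolding partial_def lookup_sum
    by (intro sum.cong refl) (auto simp: lookup_single when_def ee_def algebra_simps)
  also have "\<dots> = of_int (lk (c + ee i) i) * lk p (c + ee i)"
    by (auto simp: in_keys_iff)
  also have "lk (c + ee i) i = lk c i + 1" by (simp add: lookup_add lk_ee)
  finally show ?thesis .
qed

lemma partial_add: "partial i (p + q) = partial i p + partial i q"
  by (rule poly_mapping_eqI) (simp add: partial_lookup lookup_add algebra_simps)

lemma partial_lconst_mult: "partial i (lconst c * p) = lconst c * partial i p"
  by (rule poly_mapping_eqI) (simp only: partial_lookup lookup_lconst_mult, simp add: algebra_simps)

lemma partial_zero: "partial i 0 = 0"
  by (rule poly_mapping_eqI) (simp add: partial_lookup)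

lemma partial_sum: "partial i (sum f S) = (\<Sum>s\<in>S. partial i (f s))"
  by (induction S rule: infinite_finite_induct) (auto simp: partial_zero partial_add)

lemma partial_single: "partial i (Poly_Mapping.single a v) =
   Poly_Mapping.single (a - ee i) (of_int (lk a i) * v)"
  by (rule poly_mapping_eqI)
     (auto simp: partial_lookup lookup_single when_def lookup_add lk_ee algebra_simps)

lemma poly_decomp: "p = (\<Sum>a\<in>Poly_Mapping.keys p. Poly_Mapping.single a (lk p a))"
  by (rule poly_mapping_eqI)
     (auto simp: lookup_sum lookup_single when_def in_keys_iff)

lemma partial_leibniz: "partial i (p * q) = p * partial i q + q * partial i p"
proof -
  define sp where "sp a = Poly_Mapping.single a (lk p a)" for a
  define sq where "sq b = Poly_Mapping.single b (lk q b)" for b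
  have single_case: "partial i (Poly_Mapping.single a u * Poly_Mapping.single b v) =
     Poly_Mapping.single a u * partial i (Poly_Mapping.single b v)
     + Poly_Mapping.single b v * partial i (Poly_Mapping.single a u)" for a b u v
    by (simp add: mult_single partial_single lookup_add algebra_simps flip: single_add)
  have hp: "p = (\<Sum>a\<in>Poly_Mapping.keys p. sp a)" unfolding sp_def by (rule poly_decomp)
  have hq: "q = (\<Sum>b\<in>Poly_Mapping.keys q. sq b)" unfolding sq_def by (rule poly_decomp)
  have "p * q = (\<Sum>a\<in>Poly_Mapping.keys p. \<Sum>b\<in>Poly_Mapping.keys q. sp a * sq b)"
    by (subst hp, subst hq) (simp add: sum_product)
  then have "partial i (p * q) = (\<Sum>a\<in>Poly_Mapping.keys p. \<Sum>b\<in>Poly_Mapping.keys q.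
     sp a * partial i (sq b) + sq b * partial i (sp a))"
    by (simp add: partial_sum single_case sp_def sq_def)
  also have "\<dots> = (\<Sum>a\<in>Poly_Mapping.keys p. \<Sum>b\<in>Poly_Mapping.keys q. sp a * partial i (sq b))
     + (\<Sum>b\<in>Poly_Mapping.keys q. \<Sum>a\<in>Poly_Mapping.keys p. sq b * partial i (sp a))"
    by (simp add: sum.distrib sum.swap[of _ "Poly_Mapping.keys q"])
  also have "(\<Sum>a\<in>Poly_Mapping.keys p. \<Sum>b\<in>Poly_Mapping.keys q. sp a * partial i (sq b))
     = p * partial i q"
  proof -
    have "p * partial i q = (\<Sum>a\<in>Poly_Mapping.keys p. sp a) * partial i (\<Sum>b\<in>Poly_Mapping.keys q. sq b)"
      by (simp only: hp[symmetric] hq[symmetric])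
    then show ?thesis by (simp add: partial_sum sum_product)
  qed
  also have "(\<Sum>b\<in>Poly_Mapping.keys q. \<Sum>a\<in>Poly_Mapping.keys p. sq b * partial i (sp a))
     = q * partial i p"
  proof -
    have "q * partial i p = (\<Sum>b\<in>Poly_Mapping.keys q. sq b) * partial i (\<Sum>a\<in>Poly_Mapping.keys p. sp a)"
      by (simp only: hp[symmetric] hq[symmetric])
    then show ?thesis by (simp add: partial_sum sum_product)
  qed
  finally show ?thesis .
qed


section \<open>Derivations\<close>

definition xv :: "'n \<Rightarrow> ('n, 'a::comm_ring_1) laurent" where "xv i = X (ee i)"

lemma DerI:
  assumes "\<And>p q. D (p + q) = D p + D q" "\<And>c p. D (lconst c * p) = lconst c * D p"
    "\<And>p q. D (p * q) = p * D q + q * D p"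
  shows "D \<in> Der"
  using assms unfolding Der_def by blast

lemma Der_add: "D \<in> Der \<Longrightarrow> D (p + q) = D p + D q"
  and Der_lconst: "D \<in> Der \<Longrightarrow> D (lconst c * p) = lconst c * D p"
  and Der_mult: "D \<in> Der \<Longrightarrow> D (p * q) = p * D q + q * D p"
  unfolding Der_def by blast+

lemma Der_zero: "D \<in> Der \<Longrightarrow> D 0 = 0"
  using Der_add[of D 0 0] by simp

lemma Der_one: "D \<in> Der \<Longrightarrow> D 1 = 0"
  using Der_mult[of D 1 1] by simp

lemma lconst_mult_one: "lconst c * 1 = lconst c"
  by simp

lemma Der_const: "D \<in> Der \<Longrightarrow> D (lconst c) = 0"
  using Der_lconst[of D c 1] Der_one[of D] by simp

lemma lconst_minus_one: "lconst (-1) * p = - p"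
  by (rule poly_mapping_eqI) (simp add: lookup_lconst_mult)

lemma Der_uminus: "D \<in> Der \<Longrightarrow> D (- p) = - D p"
  using Der_lconst[of D "-1" p] by (simp add: lconst_minus_one)

lemma Der_diff: "D \<in> Der \<Longrightarrow> D (p - q) = D p - D q"
  using Der_add[of D p "-q"] Der_uminus[of D q] by simp

lemma Der_sum: "D \<in> Der \<Longrightarrow> D (sum f S) = (\<Sum>s\<in>S. D (f s))"
  by (induction S rule: infinite_finite_induct) (auto simp: Der_zero Der_add)

lemma partial_Der: "partial i \<in> Der"
  by (rule DerI) (rule partial_add, rule partial_lconst_mult, rule partial_leibniz)

lemma zero_Der: "(\<lambda>p. 0) \<in> Der"
  by (rule DerI) simp_all

lemma add_Der: assumes "D \<in> Der" "E \<in> Der" shows "(\<lambda>p. D p + E p) \<in> Der"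
  apply (rule DerI)
    apply (simp add: Der_add assms algebra_simps)
   apply (simp only: Der_lconst assms, simp add: algebra_simps)
  apply (simp add: Der_mult assms algebra_simps)
  done

lemma diff_Der: assumes "D \<in> Der" "E \<in> Der" shows "(\<lambda>p. D p - E p) \<in> Der"
  apply (rule DerI)
    apply (simp add: Der_add assms algebra_simps)
   apply (simp only: Der_lconst assms, simp add: algebra_simps)
  apply (simp add: Der_mult assms algebra_simps)
  done

lemma mul_Der: assumes "D \<in> Der" shows "(\<lambda>p. g * D p) \<in> Der"
  apply (rule DerI)
    apply (simp add: Der_add assms algebra_simps)
   apply (simp only: Der_lconst assms, simp add: algebra_simps)
  apply (simp add: Der_mult assms algebra_simps)
  done

lemma sum_Der: "(\<And>s. s \<in> S \<Longrightarrow> A s \<in> Der) \<Longrightarrow> (\<lambda>p. \<Sum>s\<in>S. A s p) \<in> Der"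
proof (induction S rule: infinite_finite_induct)
  case (infinite S) then show ?case by (simp add: zero_Der)
next
  case empty then show ?case by (simp add: zero_Der)
next
  case (insert x F)
  then show ?case using add_Der[of "A x" "\<lambda>p. \<Sum>s\<in>F. A s p"] by simp
qed

lemma bracket_Der: assumes "D \<in> Der" "E \<in> Der" shows "lie_bracket D E \<in> Der"
  unfolding lie_bracket_def
  apply (rule DerI)
    apply (simp add: Der_add assms algebra_simps)
   apply (simp only: Der_lconst assms, simp add: algebra_simps)
  apply (simp add: Der_mult Der_add assms algebra_simps)
  done

lemma X_add: "X (a + b) = (X a * X b :: ('n, 'a::comm_ring_1) laurent)"
  by (simp add: X_def mult_single)

lemma X_zero: "X 0 = 1"
  by (simp add: X_def)

lemma single_as_X: "Poly_Mapping.single a v = lconst v * X a"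
  by (simp add: X_def lconst_def mult_single)

lemma X_neg: "X a * X (-a) = 1"
  by (simp flip: X_add add: X_zero)

lemma Der_X_neg:
  assumes "D \<in> Der" "D (X a) = 0" shows "D (X (-a)) = 0"
proof -
  have "0 = D (X a * X (-a))" using assms by (simp add: X_neg Der_one)
  also have "\<dots> = X a * D (X (-a))" using assms by (simp add: Der_mult)
  finally have "X (-a) * (X a * D (X (-a))) = 0" by simp
  then show ?thesis by (simp add: mult.assoc[symmetric] mult.commute[of "X (-a)"] X_neg)
qed

lemma Der_X_add:
  assumes "D \<in> Der" "D (X a) = 0" "D (X b) = 0" shows "D (X (a + b)) = 0"
  using assms by (simp add: X_add Der_mult)

lemma Der_X_single:
  assumes "D \<in> Der" "D (xv m) = 0" shows "D (X (Poly_Mapping.single m k)) = 0"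
proof (induction k rule: int_induct[where k=0])
  case base then show ?case using assms by (simp add: X_zero Der_one)
next
  case (step1 i)
  have "Poly_Mapping.single m (i + 1) = Poly_Mapping.single m i + ee m"
    by (simp add: ee_def single_add)
  then show ?case using Der_X_add[OF assms(1) step1(2), of "ee m"] assms by (simp add: xv_def)
next
  case (step2 i)
  have "Poly_Mapping.single m (i - 1) = Poly_Mapping.single m i + - ee m"
    by (simp add: ee_def single_diff single_uminus)
  then show ?case using Der_X_add[OF assms(1) step2(2), of "- ee m"]
      Der_X_neg[of D "ee m"] assms by (simp add: xv_def)
qed

lemma exp_decomp: "(a::'n::finite \<Rightarrow>\<^sub>0 int) = (\<Sum>m\<in>UNIV. Poly_Mapping.single m (lk a m))"
  by (rule poly_mapping_eqI) (simp add: lookup_sum lookup_single when_def)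

lemma Der_ext0:
  fixes D :: "('n::finite, 'a::comm_ring_1) laurent \<Rightarrow> ('n, 'a) laurent"
  assumes D: "D \<in> Der" and h: "\<And>m. D (xv m) = 0"
  shows "D p = 0"
proof -
  have sumX: "D (X (\<Sum>m\<in>S. f m)) = 0" if "\<And>m. m \<in> S \<Longrightarrow> D (X (f m)) = 0" for S f
    using that
  proof (induction S rule: infinite_finite_induct)
    case (infinite A) then show ?case using D by (simp add: X_zero Der_one)
  next
    case empty then show ?case using D by (simp add: X_zero Der_one)
  next
    case (insert x F) then show ?case using Der_X_add[OF D] by simp
  qed
  have X0: "D (X a) = 0" for a
    by (subst exp_decomp, rule sumX) (use Der_X_single[OF D h] in auto)
  show ?thesis
    by (subst poly_decomp) (simp add: Der_sum[OF D] single_as_X Der_lconst[OF D] X0)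
qed

lemma Der_ext:
  fixes D :: "('n::finite, 'a::comm_ring_1) laurent \<Rightarrow> ('n, 'a) laurent"
  assumes "D \<in> Der" "E \<in> Der" "\<And>m. D (xv m) = E (xv m)"
  shows "D = E"
proof
  fix p
  have "(\<lambda>p. D p - E p) p = 0"
    by (rule Der_ext0[OF diff_Der[OF assms(1,2)]]) (simp add: assms(3))
  then show "D p = E p" by simp
qed

lemma partial_xv: "partial k (xv m) = (if k = m then 1 else 0)"
  by (auto simp: xv_def X_def partial_single lk_ee)

lemma Der_decomp:
  fixes D :: "('n::finite, 'a::comm_ring_1) laurent \<Rightarrow> ('n, 'a) laurent"
  assumes "D \<in> Der"
  shows "D = (\<lambda>p. \<Sum>k\<in>UNIV. D (xv k) * partial k p)"
  by (rule Der_ext[OF assms sum_Der[OF mul_Der[OF partial_Der]]])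
     (simp add: partial_xv if_distrib cong: if_cong)


section \<open>Monomial vector fields\<close>

definition M :: "('n \<Rightarrow>\<^sub>0 int) \<Rightarrow> 'n \<Rightarrow> ('n, 'a::comm_ring_1) laurent \<Rightarrow> ('n, 'a) laurent" where
  "M a k = (\<lambda>p. X a * partial k p)"

lemma M_Der: "M a k \<in> Der"
  unfolding M_def by (rule mul_Der[OF partial_Der])

lemma M_xv: "M a k (xv m) = (if k = m then X a else 0)"
  by (simp add: M_def partial_xv)

lemma M_zero: "M 0 k = partial k"
  by (simp add: M_def X_zero)

lemma partial_X: "partial k (X a) = lconst (of_int (lk a k)) * X (a - ee k)"
  by (simp add: X_def partial_single lconst_def mult_single del: single_of_int)

lemma lconst_mult_lconst: "lconst a * lconst b = lconst (a * b)"
  by (simp add: lconst_def mult_single)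

lemma lconst_zero: "lconst 0 = 0" by (simp add: lconst_def)
lemma lconst_one: "lconst 1 = 1" by (simp add: lconst_def)

lemma lconst_add: "lconst (a + b) = lconst a + lconst b"
  by (simp add: lconst_def single_add)

lemma lconst_inj: "lconst a = lconst b \<longleftrightarrow> a = b"
  by (metis lconst_def lookup_single_eq)

lemma bracket_M:
  fixes a b :: "'n::finite \<Rightarrow>\<^sub>0 int"
  shows "lie_bracket (M a j) (M b k :: ('n, 'a::comm_ring_1) laurent \<Rightarrow> _) =
    (\<lambda>p. lconst (of_int (lk b j)) * M (a + b - ee j) k p
        + lconst (- of_int (lk a k)) * M (a + b - ee k) j p)"
proof (rule Der_ext)
  show "lie_bracket (M a j) (M b k) \<in> Der" by (rule bracket_Der[OF M_Der M_Der])
  show "(\<lambda>p. lconst (of_int (lk b j)) * M (a + b - ee j) k p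
        + lconst (- of_int (lk a k)) * M (a + b - ee k) j p) \<in> Der"
    by (rule add_Der[OF mul_Der[OF M_Der] mul_Der[OF M_Der]])
  fix m
  have e1: "X a * X (b - ee j) = X (a + b - ee j)" by (simp add: X_add[symmetric] algebra_simps)
  have e2: "X b * X (a - ee k) = X (a + b - ee k)" by (simp add: X_add[symmetric] algebra_simps)
  show "lie_bracket (M a j) (M b k) (xv m) = lconst (of_int (lk b j)) * M (a + b - ee j) k (xv m)
        + lconst (- of_int (lk a k)) * M (a + b - ee k) j (xv m)"
    unfolding lie_bracket_def M_xv
    by (auto simp add: M_def partial_single partial_zero X_def lconst_def mult_single algebra_simps
        single_add[symmetric] single_diff[symmetric] single_uminus[symmetric] simp del: single_of_int)
qed


locale fixaut =
  fixes \<sigma> :: "((('n::finite, 'a::field_char_0) laurent \<Rightarrow> ('n, 'a) laurent)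
                 \<Rightarrow> (('n, 'a) laurent \<Rightarrow> ('n, 'a) laurent))"
  assumes aut: "lie_aut \<sigma>"
    and fixp: "\<And>i. \<sigma> (partial i) = partial i"
begin

lemma s_Der: "D \<in> Der \<Longrightarrow> \<sigma> D \<in> Der"
  using aut unfolding lie_aut_def bij_betw_def by blast

lemma s_inj: "D \<in> Der \<Longrightarrow> E \<in> Der \<Longrightarrow> \<sigma> D = \<sigma> E \<Longrightarrow> D = E"
  using aut unfolding lie_aut_def bij_betw_def inj_on_def by blast

lemma s_add: "D \<in> Der \<Longrightarrow> E \<in> Der \<Longrightarrow> \<sigma> (\<lambda>p. D p + E p) = (\<lambda>p. \<sigma> D p + \<sigma> E p)"
  using aut unfolding lie_aut_def by blast

lemma s_lconst: "D \<in> Der \<Longrightarrow> \<sigma> (\<lambda>p. lconst c * D p) = (\<lambda>p. lconst c * \<sigma> D p)"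
  using aut unfolding lie_aut_def by blast

lemma s_br: "D \<in> Der \<Longrightarrow> E \<in> Der \<Longrightarrow> \<sigma> (lie_bracket D E) = lie_bracket (\<sigma> D) (\<sigma> E)"
  using aut unfolding lie_aut_def by blast

lemma s_zero: "\<sigma> (\<lambda>p. 0) = (\<lambda>p. 0)"
proof -
  have "\<sigma> (\<lambda>p. 0) = \<sigma> (\<lambda>p. lconst 0 * partial undefined p)" by (simp add: lconst_zero)
  also have "\<dots> = (\<lambda>p. 0)" by (subst s_lconst[OF partial_Der]) (simp add: lconst_zero)
  finally show ?thesis .
qed

lemma s_lin2: "D \<in> Der \<Longrightarrow> E \<in> Der \<Longrightarrow>
   \<sigma> (\<lambda>p. lconst c * D p + lconst d * E p) = (\<lambda>p. lconst c * \<sigma> D p + lconst d * \<sigma> E p)"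
  using s_add[OF mul_Der mul_Der, of D E "lconst c" "lconst d"]
  by (simp add: s_lconst)

lemma s_sum: "(\<And>s. s \<in> S \<Longrightarrow> A s \<in> Der) \<Longrightarrow>
   \<sigma> (\<lambda>p. \<Sum>s\<in>S. A s p) = (\<lambda>p. \<Sum>s\<in>S. \<sigma> (A s) p)"
proof (induction S rule: infinite_finite_induct)
  case (infinite S) then show ?case by (simp add: s_zero)
next
  case empty then show ?case by (simp add: s_zero)
next
  case (insert x F)
  then show ?case using s_add[of "A x" "\<lambda>p. \<Sum>s\<in>F. A s p"] sum_Der[of F A] by simp
qed

lemma s_fixbr: "A \<in> Der \<Longrightarrow> B \<in> Der \<Longrightarrow> \<sigma> A = A \<Longrightarrow>
   \<sigma> (lie_bracket A B) = lie_bracket A (\<sigma> B)"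
  using s_br by simp

end



lemma lk_X_mult: "lk (X a * g) c = lk g (c - a)"
proof -
  have "X a * g = (\<Sum>b\<in>Poly_Mapping.keys g. Poly_Mapping.single (a + b) (lk g b))"
    by (subst poly_decomp[of g]) (simp add: sum_distrib_left X_def mult_single)
  then have "lk (X a * g) c = (\<Sum>b\<in>Poly_Mapping.keys g. if b = c - a then lk g b else 0)"
  proof -
    have "\<And>b. (a + b = c) = (b = c - a)" by (auto simp: algebra_simps)
    then show ?thesis using \<open>X a * g = _\<close> by (simp add: lookup_sum lookup_single when_def)
  qed
  then show ?thesis by (simp add: in_keys_iff)
qed

lemma lk_lconst: "lk (lconst v) d = (if d = 0 then v else 0)"
  by (simp add: lconst_def lookup_single)

lemma const_of_partials:
  fixes f :: "('n::finite, 'a::field_char_0) laurent"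
  assumes h: "\<And>i. partial i f = 0"
  shows "f = lconst (lk f 0)"
proof (rule poly_mapping_eqI)
  fix d
  show "lk f d = lk (lconst (lk f 0)) d"
  proof (cases "d = 0")
    case True then show ?thesis by (simp add: lk_lconst)
  next
    case False
    then obtain i where i: "lk d i \<noteq> 0"
      by (metis lookup_zero poly_mapping_eqI)
    have "lk (partial i f) (d - ee i) = 0" by (simp add: h)
    then have "of_int (lk d i) * lk f d = (0::'a)"
      by (simp add: partial_lookup lookup_minus lk_ee)
    then show ?thesis using i False by (simp add: lk_lconst)
  qed
qed

lemma one_dim:
  fixes f :: "('n::finite, 'a::field_char_0) laurent"
  assumes g: "\<gamma> \<noteq> 0" and k: "\<kappa> \<ge> 1"
    and eq: "X (ee j) * partial j f + lconst \<gamma> * partial j f + lconst (of_int \<kappa>) * f = 0"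
  shows "f = 0"
proof (rule ccontr)
  assume f0: "f \<noteq> 0"
  define \<phi> where "\<phi> = lk f"
  have E: "(of_int (lk c j) + of_int \<kappa>) * \<phi> c + \<gamma> * (of_int (lk c j) + 1) * \<phi> (c + ee j) = 0" for c
  proof -
    have "lk (X (ee j) * partial j f + lconst \<gamma> * partial j f + lconst (of_int \<kappa>) * f) c = 0"
      by (simp add: eq)
    then show ?thesis
      by (simp only: lookup_add lk_X_mult lookup_lconst_mult partial_lookup)
         (simp add: lookup_minus lookup_add lk_ee \<phi>_def algebra_simps)
  qed
  define K where "K = Poly_Mapping.keys f"
  have K: "finite K" "K \<noteq> {}" using f0 by (auto simp: K_def)
  define mn where "mn = Min ((\<lambda>c. lk c j) ` K)"
  define mx where "mx = Max ((\<lambda>c. lk c j) ` K)"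
  have "mn \<in> (\<lambda>c. lk c j) ` K"
    using Min_in[of "(\<lambda>c. lk c j) ` K"] K unfolding mn_def by simp
  then obtain a where a: "a \<in> K" "lk a j = mn" by force
  have "mx \<in> (\<lambda>c. lk c j) ` K"
    using Max_in[of "(\<lambda>c. lk c j) ` K"] K unfolding mx_def by simp
  then obtain b where b: "b \<in> K" "lk b j = mx" by force
  have mnmx: "mn \<le> mx" using a b K unfolding mn_def mx_def
    by (metis Max_ge finite_imageI imageI)
  have "a - ee j \<notin> K"
  proof
    assume "a - ee j \<in> K"
    then have "mn \<le> lk (a - ee j) j" unfolding mn_def using K by auto
    then show False using a by (simp add: lookup_minus lk_ee)
  qed
  then have "\<phi> (a - ee j) = 0" by (simp add: K_def \<phi>_def in_keys_iff)
  with E[of "a - ee j"] have "\<gamma> * of_int mn * \<phi> a = 0"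
    using a by (simp add: lookup_minus lk_ee)
  moreover have "\<phi> a \<noteq> 0" using a by (simp add: K_def \<phi>_def in_keys_iff)
  ultimately have mn0: "mn = 0" using g by simp
  have "b + ee j \<notin> K"
  proof
    assume "b + ee j \<in> K"
    then have "lk (b + ee j) j \<le> mx" unfolding mx_def using K by auto
    then show False using b by (simp add: lookup_add lk_ee)
  qed
  then have "\<phi> (b + ee j) = 0" by (simp add: K_def \<phi>_def in_keys_iff)
  with E[of b] have "(of_int mx + of_int \<kappa>) * \<phi> b = 0" using b by simp
  moreover have "\<phi> b \<noteq> 0" using b by (simp add: K_def \<phi>_def in_keys_iff)
  ultimately have "(of_int (mx + \<kappa>) :: 'a) = 0" by simp
  then have "mx + \<kappa> = 0" by (simp only: of_int_eq_0_iff)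
  with mn0 mnmx k show False by simp
qed



lemma partial_diff: "partial i (p - q) = partial i p - partial i q"
  by (rule Der_diff[OF partial_Der])

lemma Der_partial_xv: "D \<in> Der \<Longrightarrow> D (partial i (xv m)) = 0"
  by (simp add: partial_xv Der_one Der_zero)

lemma X_nonzero: "X a \<noteq> 0"
  by (metis X_def lookup_single_eq lookup_zero zero_neq_one)

definition hh :: "'n \<Rightarrow> ('n, 'a::comm_ring_1) laurent \<Rightarrow> ('n, 'a) laurent" where
  "hh j = M (ee j) j"

lemma hh_Der: "hh j \<in> Der" by (simp add: hh_def M_Der)

lemma hh_xv: "hh j (xv m) = (if j = m then xv m else 0)"
  unfolding hh_def M_xv by (simp add: xv_def)

lemma hh_apply: "hh j p = xv j * partial j p"
  by (simp add: hh_def M_def xv_def)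

lemma br_partial_hh:
  "lie_bracket (partial i) (hh j :: ('n::finite, 'a::comm_ring_1) laurent \<Rightarrow> _)
    = (if i = j then partial j else (\<lambda>p. 0))"
  by (rule Der_ext[OF bracket_Der[OF partial_Der hh_Der]])
     (auto simp: partial_Der zero_Der lie_bracket_def hh_xv partial_xv Der_partial_xv[OF hh_Der]
        partial_zero Der_one[OF hh_Der] Der_zero[OF hh_Der])

lemma lconst_diff: "lconst (a - b) = lconst a - lconst b"
  by (simp add: lconst_def single_diff)

lemma M_apply: "M a k p = X a * partial k p"
  by (simp add: M_def)

lemma br_partial_M:
  "lie_bracket (partial i) (M a k :: ('n::finite, 'a::comm_ring_1) laurent \<Rightarrow> _)
    = (\<lambda>p. lconst (of_int (lk a i)) * M (a - ee i) k p)"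
  by (rule Der_ext[OF bracket_Der[OF partial_Der M_Der] mul_Der[OF M_Der]])
     (auto simp: lie_bracket_def M_xv partial_X Der_partial_xv[OF M_Der] partial_zero)

lemma xv_mult_X: "xv j * X a = X (a + ee j)"
  by (simp add: xv_def X_add algebra_simps)

lemma xv_lconst_X: "xv i * (lconst c * X (a - ee i)) = lconst c * X a"
  by (subst mult.left_commute) (simp add: xv_mult_X)

lemma br_hh_M:
  "lie_bracket (hh j) (M a k :: ('n::finite, 'a::comm_ring_1) laurent \<Rightarrow> _)
    = (\<lambda>p. lconst (of_int (lk a j) - (if j = k then 1 else 0)) * M a k p)"
proof (rule Der_ext[OF bracket_Der[OF hh_Der M_Der] mul_Der[OF M_Der]])
  fix m
  show "lie_bracket (hh j) (M a k) (xv m) =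
         lconst (of_int (lk a j) - (if j = k then 1 else 0)) * M a k (xv m)"
    apply (auto simp: lie_bracket_def M_xv hh_apply partial_X partial_zero M_def partial_xv
        lconst_diff lconst_one left_diff_distrib lconst_zero)
    apply (rule xv_lconst_X)+
    done
qed

definition deg :: "('n::finite \<Rightarrow>\<^sub>0 int) \<Rightarrow> nat" where
  "deg a = (\<Sum>i\<in>UNIV. nat (lk a i))"

lemma deg_less: assumes "lk a i \<ge> 1" shows "deg (a - ee i) < deg a"
  unfolding deg_def
  by (rule sum_strict_mono_ex1) (use assms in \<open>auto simp: lookup_minus lk_ee\<close>)

lemma lconst_uminus: "lconst (- a) = - lconst a"
  by (simp add: lconst_def single_uminus)

context fixaut
begin

definition gam where "gam j m = lk (\<sigma> (hh j) (xv m) - hh j (xv m)) 0"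

lemma sh_Der: "\<sigma> (hh j) \<in> Der" by (rule s_Der[OF hh_Der])

lemma sh_xv: "\<sigma> (hh j) (xv m) = hh j (xv m) + lconst (gam j m)"
proof -
  define g where "g = \<sigma> (hh j) (xv m) - hh j (xv m)"
  have "partial i g = 0" for i
  proof -
    have "\<sigma> (lie_bracket (partial i) (hh j)) = lie_bracket (partial i) (hh j)"
      by (simp add: br_partial_hh fixp s_zero)
    then have "lie_bracket (partial i) (\<sigma> (hh j)) = lie_bracket (partial i) (hh j)"
      using s_fixbr[OF partial_Der hh_Der fixp] by simp
    then have "lie_bracket (partial i) (\<sigma> (hh j)) (xv m) = lie_bracket (partial i) (hh j) (xv m)"
      by simp
    then show ?thesis
      by (simp add: lie_bracket_def Der_partial_xv[OF sh_Der] Der_partial_xv[OF hh_Der] g_def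
          partial_diff)
  qed
  then have "g = lconst (lk g 0)" by (rule const_of_partials)
  then show ?thesis unfolding gam_def g_def[symmetric] by (simp add: g_def algebra_simps)
qed

lemma gam_offdiag:
  assumes "j \<noteq> l" shows "gam j l = 0"
proof -
  have br: "lie_bracket (hh j) (hh l :: ('n, 'a) laurent \<Rightarrow> _) = (\<lambda>p. 0)"
    using assms by (simp add: hh_def bracket_M lk_ee lconst_zero)
  have "lie_bracket (\<sigma> (hh j)) (\<sigma> (hh l)) = (\<lambda>p. 0)"
    using s_br[OF hh_Der hh_Der, of j l] br s_zero by simp
  then have "lie_bracket (\<sigma> (hh j)) (\<sigma> (hh l)) (xv l) = 0" by simp
  then have "lconst (gam j l) = (0 :: ('n, 'a) laurent)"
    using assms by (simp add: lie_bracket_def sh_xv hh_xv Der_add[OF sh_Der] Der_const[OF sh_Der])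
  then show ?thesis by (metis lconst_inj lconst_zero)
qed

lemma sh_apply: "\<sigma> (hh j) p = (xv j + lconst (gam j j)) * partial j p"
proof -
  have "\<sigma> (hh j) p = (\<Sum>k\<in>UNIV. \<sigma> (hh j) (xv k) * partial k p)"
    by (subst Der_decomp[OF sh_Der]) simp
  also have "\<dots> = (\<Sum>k\<in>UNIV. if k = j then (xv j + lconst (gam j j)) * partial j p else 0)"
    by (intro sum.cong refl) (auto simp: sh_xv hh_xv gam_offdiag lconst_zero)
  finally show ?thesis by simp
qed

lemma gam_diag: "gam j j = 0"
proof (rule ccontr)
  assume g: "gam j j \<noteq> 0"
  define \<gamma> where "\<gamma> = gam j j"
  define D :: "('n, 'a) laurent \<Rightarrow> ('n, 'a) laurent" where "D = M (- ee j) j"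
  define F where "F = \<sigma> D"
  have DD: "D \<in> Der" by (simp add: D_def M_Der)
  have FD: "F \<in> Der" by (simp add: F_def s_Der DD)
  have e: "ee j + - ee j - ee j = - ee j" by (simp add: algebra_simps)
  have br: "lie_bracket (hh j) D = (\<lambda>p. lconst (-1) * D p + lconst (-1) * D p)"
    unfolding hh_def D_def bracket_M e by (simp add: lk_ee)
  have "lie_bracket (\<sigma> (hh j)) F = \<sigma> (lie_bracket (hh j) D)"
    using s_br[OF hh_Der DD] F_def by simp
  also have "\<dots> = \<sigma> (\<lambda>p. lconst (-1) * D p + lconst (-1) * D p)" by (simp only: br)
  also have "\<dots> = (\<lambda>p. lconst (-1) * F p + lconst (-1) * F p)"
    unfolding F_def by (rule s_lin2[OF DD DD])
  finally have brF: "lie_bracket (\<sigma> (hh j)) F = (\<lambda>p. lconst (-1) * F p + lconst (-1) * F p)" .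
  have f0: "F (xv m) = 0" for m
  proof -
    define f where "f = F (xv m)"
    define \<kappa> :: int where "\<kappa> = (if j = m then 1 else 2)"
    have "lie_bracket (\<sigma> (hh j)) F (xv m) = lconst (-1) * f + lconst (-1) * f"
      using brF f_def by simp
    then have "(xv j + lconst \<gamma>) * partial j f - (if j = m then f else 0) = - f + - f"
      unfolding lie_bracket_def sh_apply
      by (auto simp: partial_xv Der_add[OF FD] Der_const[OF FD] Der_zero[OF FD] f_def
          \<gamma>_def lconst_minus_one)
    moreover have "lconst (of_int \<kappa>) * f = (if j = m then f else f + f)"
      by (auto simp: \<kappa>_def lconst_one lconst_add[of 1 1, simplified] distrib_right)
    ultimately have "X (ee j) * partial j f + lconst \<gamma> * partial j f + lconst (of_int \<kappa>) * f = 0"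
      by (auto simp: xv_def algebra_simps split: if_splits)
    from one_dim[OF _ _ this] g show ?thesis unfolding f_def \<gamma>_def \<kappa>_def by simp
  qed
  have "F = (\<lambda>p. 0)" by (rule Der_ext[OF FD zero_Der]) (simp add: f0)
  then have "\<sigma> D = \<sigma> (\<lambda>p. 0)" by (simp add: F_def s_zero)
  then have "D = (\<lambda>p. 0)" by (rule s_inj[OF DD zero_Der])
  then have "D (xv j) = 0" by simp
  then show False by (simp add: D_def M_xv X_nonzero)
qed

lemma sh_fix: "\<sigma> (hh j) = hh j"
  by (rule Der_ext[OF sh_Der hh_Der])
     (simp add: sh_xv gam_diag gam_offdiag lconst_zero, metis gam_diag gam_offdiag lconst_zero add_0_right)

lemma poly_fix: "(\<forall>i. lk a i \<ge> 0) \<Longrightarrow> \<sigma> (M a k) = M a k"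
proof (induction "deg a" arbitrary: a k rule: less_induct)
  case less
  show ?case
  proof (cases "a = 0")
    case True then show ?thesis by (simp add: M_zero fixp)
  next
    case anz: False
    define G where "G = (\<lambda>p. \<sigma> (M a k) p - M a k p)"
    have sMD: "\<sigma> (M a k) \<in> Der" by (rule s_Der[OF M_Der])
    have GD: "G \<in> Der" unfolding G_def by (rule diff_Der[OF sMD M_Der])
    have pG: "partial i (G (xv m)) = 0" for i m
    proof -
      have "\<sigma> (lie_bracket (partial i) (M a k)) = lie_bracket (partial i) (M a k)"
      proof (cases "lk a i = 0")
        case True then show ?thesis
          unfolding br_partial_M s_lconst[OF M_Der] by (simp add: lconst_zero)
      next
        case False
        then have "lk a i \<ge> 1" using less.prems[rule_format, of i] by linarith
        then have "\<sigma> (M (a - ee i) k) = M (a - ee i) k"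
          using less.hyps[OF deg_less] less.prems by (simp add: lookup_minus lk_ee)
        then show ?thesis unfolding br_partial_M s_lconst[OF M_Der] by simp
      qed
      then have "lie_bracket (partial i) (\<sigma> (M a k)) (xv m) = lie_bracket (partial i) (M a k) (xv m)"
        using s_fixbr[OF partial_Der M_Der fixp] by simp
      then show ?thesis
        by (simp add: lie_bracket_def Der_partial_xv[OF sMD] Der_partial_xv[OF M_Der] G_def
            partial_diff)
    qed
    define \<kappa> where "\<kappa> m = lk (G (xv m)) 0" for m
    have Gk: "G (xv m) = lconst (\<kappa> m)" for m
      unfolding \<kappa>_def by (rule const_of_partials[OF pG])
    define w where "w j = (of_int (lk a j) - (if j = k then 1 else 0) :: 'a)" for j
    have hG: "- (if j = m then lconst (\<kappa> m) else 0) = (lconst (w j * \<kappa> m) :: ('n, 'a) laurent)" for j m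
    proof -
      have "\<sigma> (lie_bracket (hh j) (M a k)) = lie_bracket (hh j) (\<sigma> (M a k))"
        by (rule s_fixbr[OF hh_Der M_Der sh_fix])
      then have "lie_bracket (hh j) (\<sigma> (M a k)) = (\<lambda>p. lconst (w j) * \<sigma> (M a k) p)"
        unfolding br_hh_M s_lconst[OF M_Der] w_def by simp
      moreover have "lie_bracket (hh j) (M a k) = (\<lambda>p. lconst (w j) * M a k p)"
        unfolding br_hh_M w_def by simp
      ultimately have "lie_bracket (hh j) (\<sigma> (M a k)) (xv m) - lie_bracket (hh j) (M a k) (xv m)
          = lconst (w j) * G (xv m)"
        by (simp add: G_def right_diff_distrib)
      then have "hh j (G (xv m)) - G (hh j (xv m)) = lconst (w j) * G (xv m)"
        by (simp add: lie_bracket_def G_def Der_diff[OF hh_Der] algebra_simps)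
      then show ?thesis
        by (auto simp: Gk Der_const[OF hh_Der] hh_xv Der_zero[OF GD] lconst_mult_lconst)
    qed
    have k0: "\<kappa> m = 0" for m
    proof (rule ccontr)
      assume kn: "\<kappa> m \<noteq> 0"
      have "lconst (- \<kappa> m) = (lconst (w m * \<kappa> m) :: ('n, 'a) laurent)"
        using hG[of m m] by (simp add: lconst_uminus)
      then have "- \<kappa> m = w m * \<kappa> m" by (simp add: lconst_inj)
      then have "(w m + 1) * \<kappa> m = 0" by (simp add: distrib_right) (metis add.commute neg_eq_iff_add_eq_0)
      then have "w m + 1 = 0" using kn by simp
      then have wm: "w m = -1" by (simp add: eq_neg_iff_add_eq_0)
      have wj: "w j = 0" if "j \<noteq> m" for j
      proof -
        have "lconst 0 = (lconst (w j * \<kappa> m) :: ('n, 'a) laurent)"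
          using hG[of j m] that by (simp add: lconst_zero)
        then have "w j * \<kappa> m = 0" by (simp add: lconst_inj)
        then show ?thesis using kn by simp
      qed
      have mk: "m = k"
      proof (rule ccontr)
        assume "m \<noteq> k"
        then have "(of_int (lk a m) :: 'a) = of_int (-1)" using wm by (simp add: w_def)
        then have "lk a m = -1" by (simp only: of_int_eq_iff)
        then show False using less.prems[rule_format, of m] by simp
      qed
      have "lk a j = 0" for j
      proof (cases "j = m")
        case True
        then have "(of_int (lk a j) :: 'a) = of_int 0" using wm mk by (simp add: w_def)
        then show ?thesis by (simp only: of_int_eq_iff)
      next
        case False
        then have "(of_int (lk a j) :: 'a) = of_int 0" using wj[OF False] mk by (simp add: w_def)
        then show ?thesis by (simp only: of_int_eq_iff)
      qed
      then have "a = 0" by (intro poly_mapping_eqI) simp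
      with anz show False by simp
    qed
    have G0: "G = (\<lambda>p. 0)" by (rule Der_ext[OF GD zero_Der]) (simp add: Gk k0 lconst_zero)
    show ?thesis
    proof
      fix p
      have "G p = 0" using G0 by simp
      then show "\<sigma> (M a k) p = M a k p" by (simp add: G_def)
    qed
  qed
qed

lemma laurent_fix: "\<sigma> (M a k) = M a k"
proof -
  define N where "N = (\<Sum>i\<in>UNIV. Poly_Mapping.single i (\<bar>lk a i\<bar> + 1))"
  have lkN: "lk N i = \<bar>lk a i\<bar> + 1" for i
    by (simp add: N_def lookup_sum lookup_single when_def)
  define G where "G = (\<lambda>p. \<sigma> (M a k) p - M a k p)"
  have sMD: "\<sigma> (M a k) \<in> Der" by (rule s_Der[OF M_Der])
  have GD: "G \<in> Der" unfolding G_def by (rule diff_Der[OF sMD M_Der])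
  have key: "X b * partial j (G (xv j)) = G (X b)" if hb: "\<And>i. lk b i \<ge> lk N i" for b j
  proof -
    have bnn: "\<forall>i. lk b i \<ge> 0" using hb lkN by (metis abs_ge_zero add_increasing2 zero_le_one order_trans)
    have nn1: "\<forall>i. lk (b + a - ee j) i \<ge> 0" using hb lkN
      by (auto simp: lookup_add lookup_minus lk_ee) (smt (verit) lkN hb)+
    have nn2: "\<forall>i. lk (b + a - ee k) i \<ge> 0" using hb lkN
      by (auto simp: lookup_add lookup_minus lk_ee) (smt (verit) lkN hb)+
    have "\<sigma> (lie_bracket (M b j) (M a k)) = lie_bracket (M b j) (M a k)"
      unfolding bracket_M s_lin2[OF M_Der M_Der] poly_fix[OF nn1] poly_fix[OF nn2] ..
    then have "lie_bracket (M b j) (\<sigma> (M a k)) (xv j) = lie_bracket (M b j) (M a k) (xv j)"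
      using s_fixbr[OF M_Der M_Der poly_fix[OF bnn]] by simp
    then show ?thesis
      by (simp add: lie_bracket_def M_xv G_def partial_diff right_diff_distrib M_apply partial_xv)
         (cases "k = j", simp_all add: algebra_simps)
  qed
  have G0: "G (xv m) = 0" for m
  proof -
    have h1: "X N * partial m (G (xv m)) = G (X N)" by (rule key) simp
    have h2: "X (N + ee m) * partial m (G (xv m)) = G (X (N + ee m))"
      by (rule key) (simp add: lookup_add lk_ee)
    have eqX: "X (N + ee m) = xv m * X N" by (simp add: xv_mult_X)
    have "xv m * (X N * partial m (G (xv m))) = X (N + ee m) * partial m (G (xv m))"
      by (simp add: eqX mult.assoc)
    also have "\<dots> = G (X (N + ee m))" by (rule h2)
    also have "\<dots> = G (xv m * X N)" by (simp add: eqX)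
    also have "\<dots> = xv m * G (X N) + X N * G (xv m)" by (rule Der_mult[OF GD])
    finally have "xv m * (X N * partial m (G (xv m))) = xv m * G (X N) + X N * G (xv m)" .
    then have "X N * G (xv m) = 0" using h1 by simp
    then have "X (-N) * (X N * G (xv m)) = 0" by simp
    then show ?thesis by (simp add: mult.assoc[symmetric] mult.commute[of "X (-N)"] X_neg)
  qed
  have G00: "G = (\<lambda>p. 0)" by (rule Der_ext[OF GD zero_Der]) (simp add: G0)
  show ?thesis
  proof
    fix p
    have "G p = 0" using G00 by simp
    then show "\<sigma> (M a k) p = M a k p" by (simp add: G_def)
  qed
qed

lemma all_fix:
  assumes DD: "D \<in> Der" shows "\<sigma> D = D"
proof -
  define c where "c k a = lk (D (xv k)) a" for k a
  define A where "A k = (\<lambda>p. \<Sum>a\<in>Poly_Mapping.keys (D (xv k)). lconst (c k a) * M a k p)" for k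
  have AD: "A k \<in> Der" for k
    unfolding A_def by (rule sum_Der) (rule mul_Der[OF M_Der])
  have Dsum: "D = (\<lambda>p. \<Sum>k\<in>UNIV. A k p)"
  proof
    fix p
    have "D p = (\<Sum>k\<in>UNIV. D (xv k) * partial k p)"
      by (subst Der_decomp[OF DD]) simp
    also have "\<dots> = (\<Sum>k\<in>UNIV. A k p)"
    proof (intro sum.cong refl)
      fix k
      have "D (xv k) * partial k p =
          (\<Sum>a\<in>Poly_Mapping.keys (D (xv k)). Poly_Mapping.single a (lk (D (xv k)) a)) * partial k p"
        by (subst poly_decomp[of "D (xv k)"]) simp
      also have "\<dots> = A k p"
        by (simp add: A_def c_def sum_distrib_right single_as_X M_apply mult.assoc)
      finally show "D (xv k) * partial k p = A k p" .
    qed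
    finally show "D p = (\<Sum>k\<in>UNIV. A k p)" .
  qed
  have sA: "\<sigma> (A k) = A k" for k
    unfolding A_def
    by (subst s_sum) (simp_all add: mul_Der[OF M_Der] s_lconst[OF M_Der] laurent_fix)
  show ?thesis
  proof -
    have "\<sigma> D = \<sigma> (\<lambda>p. \<Sum>k\<in>UNIV. A k p)" using Dsum by simp
    also have "\<dots> = (\<lambda>p. \<Sum>k\<in>UNIV. A k p)" by (subst s_sum) (simp_all add: AD sA)
    finally show ?thesis using Dsum by simp
  qed
qed

end

theorem proposition2p11:
  fixes \<sigma> :: "((('n::finite, 'a::field_char_0) laurent \<Rightarrow> ('n, 'a) laurent)
                 \<Rightarrow> (('n, 'a) laurent \<Rightarrow> ('n, 'a) laurent))"
  assumes "lie_aut \<sigma>"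
    and "\<And>i. \<sigma> (partial i) = partial i"
  shows "\<forall>D\<in>Der. \<sigma> D = D"
proof -
  interpret fixaut \<sigma> using assms by unfold_locales
  show ?thesis using all_fix by blast
qed

end
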